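(* Let $n\ge6$ be even, $m\in\mathbb N$, and assume the seeds are i.i.d. uniform on $[n]$. Then for every $k\in\{2,\dots,n/2\}$, $$\mathsf P\bigl(\Xi_{\{1,k\}}(1)\le\Xi_{\{1,k\}}(k)\bigr)\le\exp\Bigl\{m\log\Bigl[1-\tfrac1n\bigl(\sqrt{n+1-k}-\sqrt{k-1}\bigr)^2\Bigr]\Bigr\}.$$
   Context: Candidates $[n]$, $m$ voters; voter $j$ has the clockwise oriented preference list $(s_j,s_j+1,\dots,n,1,\dots,s_j-1)$ with seed $s_j$; the seeds are independent and uniform on $[n]$. In an election among a non-empty $S\subseteq[n]$ each voter votes for the first candidate of $S$ in its list; $\Xi_S(i)$ is the number of votes for $i\in S$. *)

theory Defs
  imports "HOL-Probability.Probability"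
begin

text \<open>Candidates are 1..n. The clockwise preference list of a voter with seed s
  is (s, s+1, ..., n, 1, ..., s-1).\<close>
definition pref_list :: "nat \<Rightarrow> nat \<Rightarrow> nat list" where
  "pref_list n s = [s..<n+1] @ [1..<s]"

definition vote :: "nat \<Rightarrow> nat set \<Rightarrow> nat \<Rightarrow> nat" where
  "vote n S s = hd (filter (\<lambda>c. c \<in> S) (pref_list n s))"

definition Xi :: "nat \<Rightarrow> nat \<Rightarrow> (nat \<Rightarrow> nat) \<Rightarrow> nat set \<Rightarrow> nat \<Rightarrow> nat" where
  "Xi n m seeds S i = card {j \<in> {..<m}. vote n S (seeds j) = i}"

text \<open>Seeds i.i.d. uniform on [n]: uniform distribution on seed vectors.\<close>
definition seed_pmf :: "nat \<Rightarrow> nat \<Rightarrow> (nat \<Rightarrow> nat) pmf" where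
  "seed_pmf n m = pmf_of_set (PiE {..<m} (\<lambda>_. {1..n}))"

end

theory Submission imports Defs begin

lemma vote_eq:
  assumes "1 \<le> s" "s \<le> n" "2 \<le> k" "k \<le> n"
  shows "vote n {1,k} s = (if 2 \<le> s \<and> s \<le> k then k else 1)"
proof (cases "2 \<le> s \<and> s \<le> k")
  case True
  have e: "[s..<n+1] = [s..<k] @ k # [k+1..<n+1]"
  proof -
    have "[s..<n+1] = [s..<k] @ [k..<k+(n+1-k)]"
      using True assms upt_add_eq_append[of s k "n+1-k"] by simp
    also have "[k..<k+(n+1-k)] = k # [k+1..<n+1]" using assms by (simp add: upt_conv_Cons)
    finally show ?thesis .
  qed
  have f: "filter (\<lambda>c. c \<in> {1,k}) [s..<k] = []"
    using True by (auto simp: filter_empty_conv)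
  show ?thesis using True unfolding vote_def pref_list_def e by (simp add: f)
next
  case False
  show ?thesis
  proof (cases "s = 1")
    case True
    have e: "[1..<n+1] = 1 # [Suc 1..<n+1]" using assms by (simp add: upt_conv_Cons)
    have "vote n {1,k} s = 1" unfolding vote_def pref_list_def True e by simp
    then show ?thesis using False by simp
  next
    case F2: False
    with False assms have sk: "k < s" by auto
    have f: "filter (\<lambda>c. c \<in> {1,k}) [s..<n+1] = []"
      using sk assms by (auto simp: filter_empty_conv)
    have e: "[1..<s] = 1 # [Suc 1..<s]" using F2 assms by (simp add: upt_conv_Cons)
    have "vote n {1,k} s = 1" unfolding vote_def pref_list_def filter_append f e by simp
    then show ?thesis using False by simp
  qed
qed

theorem mainTheorem5:
  fixes n m k :: nat
  assumes "n \<ge> 6" and "even n" and "2 \<le> k" and "k \<le> n div 2"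
  shows "measure_pmf.prob (seed_pmf n m)
           {seeds. Xi n m seeds {1, k} 1 \<le> Xi n m seeds {1, k} k}
         \<le> exp (real m * ln (1 - (sqrt (real (n + 1 - k)) - sqrt (real (k - 1)))\<^sup>2 / real n))"
proof -
  define S where "S = PiE {..<m} (\<lambda>_::nat. {1..n::nat})"
  define A where "A = {seeds. Xi n m seeds {1, k} 1 \<le> Xi n m seeds {1, k} k}"
  define p where "p = real (n + 1 - k)"
  define q where "q = real (k - 1)"
  define a where "a = sqrt p"
  define b where "b = sqrt q"
  define r where "r = a / b"
  define w where "w = (\<lambda>s::nat. if 2 \<le> s \<and> s \<le> k then r else 1 / r)"
  define W where "W = (\<lambda>x::nat\<Rightarrow>nat. \<Prod>j<m. w (x j))"
  have kn: "k \<le> n" using assms by auto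
  have q0: "q > 0" using assms by (simp add: q_def)
  have qp: "q \<le> p" using assms by (simp add: q_def p_def)
  have pq: "p + q = real n" using assms by (simp add: q_def p_def)
  have b0: "b > 0" using q0 by (simp add: b_def)
  have a0: "a > 0" using q0 qp by (simp add: a_def)
  have ba: "b \<le> a" using qp by (simp add: a_def b_def)
  have r1: "r \<ge> 1" using ba b0 by (simp add: r_def)
  have r0: "r > 0" using r1 by simp
  have Sfin: "finite S" unfolding S_def by (simp add: finite_PiE)
  have Sne: "S \<noteq> {}" unfolding S_def using assms by (simp add: PiE_eq_empty_iff)
  have cardS: "card S = n ^ m" unfolding S_def by (simp add: card_PiE)
  have prob: "measure_pmf.prob (seed_pmf n m) A = card (S \<inter> A) / card S"
    unfolding seed_pmf_def S_def[symmetric] using measure_pmf_of_set[OF Sne Sfin] by simp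
  have W0: "W x \<ge> 0" for x unfolding W_def w_def using r0 by (intro prod_nonneg) auto
  have W1: "W x \<ge> 1" if xS: "x \<in> S" and xA: "x \<in> A" for x
  proof -
    define P where "P = (\<lambda>j. 2 \<le> x j \<and> x j \<le> k)"
    have xr: "1 \<le> x j \<and> x j \<le> n" if "j < m" for j using PiE_mem[OF xS[unfolded S_def], of j] that by simp
    have ve: "vote n {1,k} (x j) = (if P j then k else 1)" if "j < m" for j
      unfolding P_def using xr[OF that] assms(3) kn by (intro vote_eq) auto
    have k1: "k \<noteq> 1" using assms(3) by simp
    have vk: "vote n {1,k} (x j) = k \<longleftrightarrow> P j" if "j < m" for j
      using ve[OF that] k1 by simp
    have v1: "vote n {1,k} (x j) = 1 \<longleftrightarrow> \<not> P j" if "j < m" for j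
      using ve[OF that] k1 by simp
    have X1: "Xi n m x {1,k} 1 = card ({..<m} \<inter> - {j. P j})"
      unfolding Xi_def using v1 by (intro arg_cong[where f=card]) auto
    have Xk: "Xi n m x {1,k} k = card ({..<m} \<inter> {j. P j})"
      unfolding Xi_def using vk by (intro arg_cong[where f=card]) auto
    define ca where "ca = card ({..<m} \<inter> {j. P j})"
    define cb where "cb = card ({..<m} \<inter> - {j. P j})"
    have cab: "cb \<le> ca" using xA X1 Xk unfolding A_def ca_def cb_def by simp
    have "W x = (\<Prod>j<m. if P j then r else 1 / r)" unfolding W_def w_def P_def by simp
    also have "\<dots> = r ^ ca * (1 / r) ^ cb"
      unfolding prod.If_cases[OF finite_lessThan] ca_def cb_def by simp
    finally have "W x = r ^ ca * (1 / r) ^ cb" .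
    moreover have "r ^ cb \<le> r ^ ca" using r1 cab by (rule power_increasing[rotated])
    ultimately have "W x = r ^ ca / r ^ cb" by (simp add: power_one_over)
    moreover have "r ^ cb > 0" using r0 by simp
    ultimately show ?thesis using \<open>r ^ cb \<le> r ^ ca\<close> by (simp add: le_divide_eq)
  qed
  have sumW: "(\<Sum>x\<in>S. W x) = (\<Sum>s\<in>{1..n}. w s) ^ m"
    unfolding W_def S_def using prod_sum_PiE[of "{..<m}" "\<lambda>_. {1..n}" "\<lambda>_ s. w s"]
    by simp
  have sw: "(\<Sum>s\<in>{1..n}. w s) = 2 * a * b"
  proof -
    have e1: "{1..n} \<inter> {s. 2 \<le> s \<and> s \<le> k} = {2..k}" using kn by auto
    have e2: "{1..n} \<inter> - {s. 2 \<le> s \<and> s \<le> k} = {1..n} - {2..k}" by auto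
    have c2: "card ({1..n} - {2..k}) = n + 1 - k"
      using kn assms by (subst card_Diff_subset) auto
    have "(\<Sum>s\<in>{1..n}. w s) = real (card {2..k}) * r + real (card ({1..n} - {2..k})) * (1 / r)"
      unfolding w_def sum.If_cases[OF finite_atLeastAtMost] e1 e2 by simp
    also have "\<dots> = real (k - 1) * r + real (n + 1 - k) * (1 / r)"
      unfolding c2 by simp
    also have "\<dots> = q * r + p / r" by (simp add: p_def q_def)
    also have "\<dots> = 2 * a * b"
    proof -
      have "q = b^2" using q0 by (simp add: b_def)
      moreover have "p = a^2" using q0 qp by (simp add: a_def)
      ultimately show ?thesis using a0 b0 by (simp add: r_def field_simps power2_eq_square)
    qed
    finally show ?thesis .
  qed
  have "card (S \<inter> A) = (\<Sum>x\<in>S \<inter> A. (1::real))" by simp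
  also have "\<dots> \<le> (\<Sum>x\<in>S \<inter> A. W x)" using W1 by (intro sum_mono) auto
  also have "\<dots> \<le> (\<Sum>x\<in>S. W x)" using Sfin W0 by (intro sum_mono2) auto
  finally have cA: "card (S \<inter> A) \<le> (2 * a * b) ^ m" using sumW sw by simp
  have n0: "real n > 0" using assms by simp
  have "measure_pmf.prob (seed_pmf n m) A \<le> (2 * a * b) ^ m / real n ^ m"
    unfolding prob cardS using cA n0 by (simp add: divide_right_mono)
  also have "\<dots> = (2 * a * b / real n) ^ m" by (simp add: power_divide)
  also have "\<dots> = exp (real m * ln (2 * a * b / real n))"
  proof -
    have pos: "2 * a * b / real n > 0" using a0 b0 n0 by simp
    have "exp (real m * ln (2 * a * b / real n)) = (2 * a * b / real n) powr real m"
      using pos a0 b0 n0 by (simp add: powr_def)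
    also have "\<dots> = (2 * a * b / real n) ^ m" using pos by (simp add: powr_realpow)
    finally show ?thesis by simp
  qed
  also have "2 * a * b / real n = 1 - (a - b)\<^sup>2 / real n"
  proof -
    have "(a - b)\<^sup>2 = p + q - 2 * a * b"
      using q0 qp by (simp add: a_def b_def power2_diff)
    then show ?thesis using pq n0 by (simp add: field_simps)
  qed
  finally show ?thesis unfolding A_def a_def b_def p_def q_def .
qed

end
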